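(* Let $J : \mathfrak{n} \rightarrow \mathfrak{n}$ be any linear map. $J$ has zero torsion if and only if it is equivalent to one of the endomorphisms defined in the basis $(x_1,x_2,x_3)$ by: (i) $S(\xi^3_3)=\begin{pmatrix} 0&-1&0\\ 1&0&0\\ 0&0&\xi^3_3 \end{pmatrix}$, $\xi^3_3 \in \mathbb{R}$; (ii) $D(\xi^1_1)=\begin{pmatrix} \xi^1_1&0&0\\ 0&\xi^1_1&0\\ 0&0&\frac{(\xi^1_1)^2-1}{2\xi^1_1} \end{pmatrix}$, $\xi^1_1 \in \mathbb{R}$, $\xi^1_1 \neq 0$; (iii) $T(a,b)=\begin{pmatrix} 0&-ab&0\\ 1&b&0\\ 0&0&\frac{ab-1}{b} \end{pmatrix}$, $a,b \in \mathbb{R}$, $b \neq 0$. Any two distinct endomorphisms in the preceding list are non equivalent. $T(a,b)$ is equivalent to $T'(a,b)=\begin{pmatrix} b&-b&0\\ a&0&0\\ 0&0&\frac{ab-1}{b} \end{pmatrix}$.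
   Context: $\mathfrak{n}$ is the real 3-dimensional Heisenberg Lie algebra with basis $(x_1,x_2,x_3)$ and commutation relations $[x_1,x_2]=x_3$. A linear map $J:\mathfrak{g}\to\mathfrak{g}$ on a real Lie algebra has zero torsion if $[JX,JY]-[X,Y]-J[JX,Y]-J[X,JY]=0$ for all $X,Y\in\mathfrak{g}$. Two such maps $J,J'$ are equivalent if $J'=\Phi\circ J\circ\Phi^{-1}$ for some $\Phi\in\mathrm{Aut}\,\mathfrak{g}$. *)

theory Defs
  imports "HOL-Analysis.Analysis"
begin

text \<open>The Heisenberg Lie algebra n = R^3 with basis x1,x2,x3 (standard basis vectors),
  bracket [x1,x2] = x3 extended bilinearly and antisymmetrically.\<close>
definition heis_br :: "real^3 \<Rightarrow> real^3 \<Rightarrow> real^3" where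
  "heis_br X Y = vector [0, 0, X$1 * Y$2 - X$2 * Y$1]"

text \<open>Linear maps n -> n are represented by their matrices in the basis (x1,x2,x3):
  column j holds the coordinates of J x_j, so J applied to X is J *v X.\<close>
definition zero_torsion :: "real^3^3 \<Rightarrow> bool" where
  "zero_torsion J \<longleftrightarrow> (\<forall>X Y.
     heis_br (J *v X) (J *v Y) - heis_br X Y - J *v heis_br (J *v X) Y
       - J *v heis_br X (J *v Y) = 0)"

definition heis_aut :: "real^3^3 \<Rightarrow> bool" where
  "heis_aut P \<longleftrightarrow> invertible P \<and> (\<forall>X Y. P *v heis_br X Y = heis_br (P *v X) (P *v Y))"

definition heis_equiv :: "real^3^3 \<Rightarrow> real^3^3 \<Rightarrow> bool" where
  "heis_equiv J J' \<longleftrightarrow> (\<exists>P. heis_aut P \<and> J' = P ** J ** matrix_inv P)"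

definition mat3 :: "real list \<Rightarrow> real list \<Rightarrow> real list \<Rightarrow> real^3^3" where
  "mat3 r1 r2 r3 = vector [vector r1, vector r2, vector r3]"

definition S_end :: "real \<Rightarrow> real^3^3" where
  "S_end c = mat3 [0, -1, 0] [1, 0, 0] [0, 0, c]"

definition D_end :: "real \<Rightarrow> real^3^3" where
  "D_end d = mat3 [d, 0, 0] [0, d, 0] [0, 0, (d^2 - 1) / (2 * d)]"

definition T_end :: "real \<Rightarrow> real \<Rightarrow> real^3^3" where
  "T_end a b = mat3 [0, -(a*b), 0] [1, b, 0] [0, 0, (a*b - 1) / b]"

definition T'_end :: "real \<Rightarrow> real \<Rightarrow> real^3^3" where
  "T'_end a b = mat3 [b, -b, 0] [a, 0, 0] [0, 0, (a*b - 1) / b]"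

definition normal_forms :: "(real^3^3) set" where
  "normal_forms = range S_end \<union> {D_end d | d. d \<noteq> 0} \<union> {T_end a b | a b. b \<noteq> 0}"

end

theory Submission
  imports Defs
begin

lemma minv: assumes "invertible (A::real^3^3)"
  shows "A ** matrix_inv A = mat 1" "matrix_inv A ** A = mat 1"
proof -
  have "\<exists>A'. A ** A' = mat 1 \<and> A' ** A = mat 1" using assms unfolding invertible_def by blast
  from someI_ex[OF this] show "A ** matrix_inv A = mat 1" "matrix_inv A ** A = mat 1"
    unfolding matrix_inv_def by auto
qed

lemma mat3_nth[simp]:
  "mat3 [a,b,c] [d,e,f] [g,h,i] $1$1 = a" "mat3 [a,b,c] [d,e,f] [g,h,i] $1$2 = b"
  "mat3 [a,b,c] [d,e,f] [g,h,i] $1$3 = c" "mat3 [a,b,c] [d,e,f] [g,h,i] $2$1 = d"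
  "mat3 [a,b,c] [d,e,f] [g,h,i] $2$2 = e" "mat3 [a,b,c] [d,e,f] [g,h,i] $2$3 = f"
  "mat3 [a,b,c] [d,e,f] [g,h,i] $3$1 = g" "mat3 [a,b,c] [d,e,f] [g,h,i] $3$2 = h"
  "mat3 [a,b,c] [d,e,f] [g,h,i] $3$3 = i"
  by (simp_all add: mat3_def)

lemma mat_eq3: "(M::real^3^3) = N \<longleftrightarrow> (\<forall>i j. M$i$j = N$i$j)"
  by (simp add: vec_eq_iff)

lemmas ent = matrix_matrix_mult_def matrix_vector_mult_def sum_3 heis_br_def

lemma zt_char: "zero_torsion J \<longleftrightarrow> J$1$3 = 0 \<and> J$2$3 = 0 \<and>
   J$3$3 * (J$1$1 + J$2$2) = J$1$1 * J$2$2 - J$1$2 * J$2$1 - 1"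
proof
  assume z: "zero_torsion J"
  have h1: "heis_br (J *v X) (J *v Y) - heis_br X Y - J *v heis_br (J *v X) Y
       - J *v heis_br X (J *v Y) = 0" for X Y using z unfolding zero_torsion_def by blast
  have a: "J$2$3 = 0" using h1[of "vector [1,0,0]" "vector [0,0,1]"]
    by (auto simp: vec_eq_iff forall_3 ent)
  have b: "J$1$3 = 0" using h1[of "vector [0,1,0]" "vector [0,0,1]"]
    by (auto simp: vec_eq_iff forall_3 ent)
  have c: "J$3$3 * (J$1$1 + J$2$2) = J$1$1 * J$2$2 - J$1$2 * J$2$1 - 1"
    using h1[of "vector [1,0,0]" "vector [0,1,0]"] a b
    by (auto simp: vec_eq_iff forall_3 ent algebra_simps)
  show "J$1$3 = 0 \<and> J$2$3 = 0 \<and>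
   J$3$3 * (J$1$1 + J$2$2) = J$1$1 * J$2$2 - J$1$2 * J$2$1 - 1" using a b c by blast
next
  assume h: "J$1$3 = 0 \<and> J$2$3 = 0 \<and>
   J$3$3 * (J$1$1 + J$2$2) = J$1$1 * J$2$2 - J$1$2 * J$2$1 - 1"
  show "zero_torsion J" unfolding zero_torsion_def
  proof (intro allI)
    fix X Y :: "real^3"
    have e: "J$3$3 * (J$1$1 + J$2$2) * (X$1 * Y$2 - X$2 * Y$1) = (J$1$1 * J$2$2 - J$1$2 * J$2$1 - 1)* (X$1 * Y$2 - X$2 * Y$1)"
      using h by simp
    show "heis_br (J *v X) (J *v Y) - heis_br X Y - J *v heis_br (J *v X) Y
       - J *v heis_br X (J *v Y) = 0"
      using h e by (simp add: vec_eq_iff forall_3 ent algebra_simps)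
  qed
qed


lemma aut_form: assumes "heis_aut P"
  shows "P$1$3 = 0" "P$2$3 = 0" "P$3$3 = P$1$1*P$2$2 - P$1$2*P$2$1" "P$1$1*P$2$2 - P$1$2*P$2$1 \<noteq> 0"
proof -
  have h: "P *v heis_br X Y = heis_br (P *v X) (P *v Y)" for X Y using assms heis_aut_def by blast
  from h[of "vector [1,0,0]" "vector [0,1,0]"]
  show a: "P$1$3 = 0" "P$2$3 = 0" "P$3$3 = P$1$1*P$2$2 - P$1$2*P$2$1"
    by (auto simp: vec_eq_iff forall_3 ent algebra_simps)
  have "det P \<noteq> 0" using assms heis_aut_def invertible_det_nz by blast
  moreover have "det P = P$3$3*(P$1$1*P$2$2 - P$1$2*P$2$1)" using a(1,2) by (simp add: det_3 algebra_simps)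
  ultimately show "P$1$1*P$2$2 - P$1$2*P$2$1 \<noteq> 0" by simp
qed

lemma transfer: assumes "heis_aut P"
  shows "zero_torsion J \<longleftrightarrow> zero_torsion (P ** J ** matrix_inv P)"
proof -
  define Q where "Q = matrix_inv P"
  have inv: "invertible P" using assms heis_aut_def by blast
  have PQ: "P ** Q = mat 1" "Q ** P = mat 1" using minv[OF inv] Q_def by auto
  have br: "P *v heis_br X Y = heis_br (P *v X) (P *v Y)" for X Y using assms heis_aut_def by blast
  define K where "K = P ** J ** Q"
  have KP: "K *v (P *v X) = P *v (J *v X)" for X
    by (simp add: K_def matrix_vector_mul_assoc matrix_mul_assoc[symmetric] PQ)
  have key: "heis_br (K *v (P *v X)) (K *v (P *v Y)) - heis_br (P *v X) (P *v Y) - K *v heis_br (K *v (P *v X)) (P *v Y)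
       - K *v heis_br (P *v X) (K *v (P *v Y)) =
      P *v (heis_br (J *v X) (J *v Y) - heis_br X Y - J *v heis_br (J *v X) Y
       - J *v heis_br X (J *v Y))" for X Y
    by (simp add: KP br[symmetric] matrix_vector_mult_diff_distrib)
  show ?thesis unfolding Q_def[symmetric] K_def[symmetric] zero_torsion_def
  proof
    assume z: "\<forall>X Y. heis_br (J *v X) (J *v Y) - heis_br X Y - J *v heis_br (J *v X) Y - J *v heis_br X (J *v Y) = 0"
    show "\<forall>X Y. heis_br (K *v X) (K *v Y) - heis_br X Y - K *v heis_br (K *v X) Y - K *v heis_br X (K *v Y) = 0"
    proof (intro allI)
      fix X Y
      have "X = P *v (Q *v X)" "Y = P *v (Q *v Y)" by (simp_all add: matrix_vector_mul_assoc PQ)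
      then show "heis_br (K *v X) (K *v Y) - heis_br X Y - K *v heis_br (K *v X) Y - K *v heis_br X (K *v Y) = 0"
        using key[of "Q *v X" "Q *v Y"] z by (metis matrix_vector_mult_0_right)
    qed
  next
    assume z: "\<forall>X Y. heis_br (K *v X) (K *v Y) - heis_br X Y - K *v heis_br (K *v X) Y - K *v heis_br X (K *v Y) = 0"
    show "\<forall>X Y. heis_br (J *v X) (J *v Y) - heis_br X Y - J *v heis_br (J *v X) Y - J *v heis_br X (J *v Y) = 0"
    proof (intro allI)
      fix X Y
      have "Q *v (P *v V) = V" for V by (simp add: matrix_vector_mul_assoc PQ)
      then show "heis_br (J *v X) (J *v Y) - heis_br X Y - J *v heis_br (J *v X) Y - J *v heis_br X (J *v Y) = 0"
        using key[of X Y] z by (metis matrix_vector_mult_0_right)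
    qed
  qed
qed

lemma core:
  fixes a11 a12 a21 a22 r1 r2 l c11 c12 c21 c22 b11 b12 b21 b22 :: real
  assumes J: "J = mat3 [a11,a12,0] [a21,a22,0] [r1,r2,l]"
    and N: "N = mat3 [c11,c12,0] [c21,c22,0] [0,0,l]"
    and d: "b11*b22 - b12*b21 \<noteq> 0"
    and e: "(l-a11)*(l-a22) - a12*a21 \<noteq> 0"
    and cb: "c11*b11 + c12*b21 = b11*a11 + b12*a21" "c11*b12 + c12*b22 = b11*a12 + b12*a22"
            "c21*b11 + c22*b21 = b21*a11 + b22*a21" "c21*b12 + c22*b22 = b21*a12 + b22*a22"
  shows "heis_equiv J N"
proof -
  define dl where "dl = b11*b22 - b12*b21"
  define ee where "ee = (l-a11)*(l-a22) - a12*a21"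
  define s1 where "s1 = dl*(r1*(l-a22) + r2*a21)/ee"
  define s2 where "s2 = dl*(r2*(l-a11) + r1*a12)/ee"
  define P where "P = mat3 [b11,b12,0] [b21,b22,0] [s1,s2,dl]"
  have ee: "ee \<noteq> 0" using e ee_def by simp
  have dl: "dl \<noteq> 0" using d dl_def by simp
  have s1e: "s1*ee = dl*(r1*(l-a22) + r2*a21)" using ee s1_def by simp
  have s2e: "s2*ee = dl*(r2*(l-a11) + r1*a12)" using ee s2_def by simp
  have "ee*(l * s1 - (s1*a11 + s2*a21 + dl*r1)) = 0" "ee*(l * s2 - (s1*a12+s2*a22 + dl*r2)) = 0"
    using s1e s2e unfolding ee_def by algebra+
  then have s: "l * s1 = s1*a11 + s2*a21 + dl*r1" "l * s2 = s1*a12+s2*a22 + dl*r2"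
    using ee by auto
  have NP: "N ** P = P ** J"
    unfolding mat_eq3 using cb s
    by (auto simp: J N P_def forall_3 ent algebra_simps)
  have "det P = dl * dl" by (simp add: P_def det_3 dl_def algebra_simps)
  then have detP: "det P \<noteq> 0" using dl by simp
  then have inv: "invertible P" using invertible_det_nz by blast
  have aut: "heis_aut P" unfolding heis_aut_def
  proof (intro conjI allI inv)
    fix X Y :: "real^3"
    show "P *v heis_br X Y = heis_br (P *v X) (P *v Y)"
      by (simp add: vec_eq_iff forall_3 ent P_def dl_def algebra_simps)
  qed
  have "N = N ** P ** matrix_inv P" using minv[OF inv] by (simp add: matrix_mul_assoc[symmetric])
  also have "\<dots> = P ** J ** matrix_inv P" using NP by simp
  finally show ?thesis unfolding heis_equiv_def using aut by blast
qed


lemma mat_decomp: "(J::real^3^3) = mat3 [J$1$1, J$1$2, J$1$3] [J$2$1, J$2$2, J$2$3] [J$3$1, J$3$2, J$3$3]"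
  unfolding mat_eq3 by (auto simp: forall_3)

lemma companion:
  fixes a11 a12 a21 a22 r1 r2 l w1 w2 :: real
  assumes J: "J = mat3 [a11,a12,0] [a21,a22,0] [r1,r2,l]"
    and c: "l * (a11 + a22) = a11*a22 - a12*a21 - 1"
    and w: "w1*w2*a11 + w2*w2*a21 - w1*w1*a12 - w1*w2*a22 \<noteq> 0"
  shows "heis_equiv J (mat3 [0, -(a11*a22 - a12*a21), 0] [1, a11+a22, 0] [0,0,l])"
proof (rule core[where ?b11.0="w1*a11 + w2*a21 - (a11+a22)*w1" and ?b12.0="w1*a12 + w2*a22 - (a11+a22)*w2"
   and ?b21.0=w1 and ?b22.0=w2, OF J refl])
  have "(l-a11)*(l-a22) - a12*a21 = l*l + 1" using c by algebra
  moreover have "l*l + 1 > 0" using zero_le_square[of l] by linarith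
  ultimately show "(l-a11)*(l-a22) - a12*a21 \<noteq> 0" by simp
  show "(w1*a11 + w2*a21 - (a11+a22)*w1) * w2 - (w1*a12 + w2*a22 - (a11+a22)*w2) * w1 \<noteq> 0"
    using w by (simp add: algebra_simps)
qed (simp_all add: algebra_simps)

lemma forward: assumes "zero_torsion J"
  shows "(\<exists>c. heis_equiv J (S_end c))
          \<or> (\<exists>d. d \<noteq> 0 \<and> heis_equiv J (D_end d))
          \<or> (\<exists>a b. b \<noteq> 0 \<and> heis_equiv J (T_end a b))"
proof -
  define a11 where "a11 = J$1$1"
  define a12 where "a12 = J$1$2"
  define a21 where "a21 = J$2$1"
  define a22 where "a22 = J$2$2"
  define r1 where "r1 = J$3$1"
  define r2 where "r2 = J$3$2"
  define l where "l = J$3$3"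
  have z: "J$1$3 = 0" "J$2$3 = 0" and c: "l * (a11 + a22) = a11*a22 - a12*a21 - 1"
    using assms[unfolded zt_char] by (auto simp: a11_def a12_def a21_def a22_def l_def)
  have J: "J = mat3 [a11,a12,0] [a21,a22,0] [r1,r2,l]"
    using mat_decomp[of J] z by (simp add: a11_def a12_def a21_def a22_def r1_def r2_def l_def)
  show ?thesis
  proof (cases "a12 = 0 \<and> a21 = 0 \<and> a11 = a22")
    case True
    then have d: "a11 \<noteq> 0" using c by auto
    have lv: "l = (a11^2 - 1)/(2*a11)" using c True d by (simp add: field_simps power2_eq_square)
    have "heis_equiv J (D_end a11)" unfolding D_end_def lv[symmetric]
    proof (rule core[where ?b11.0=1 and ?b12.0=0 and ?b21.0=0 and ?b22.0=1, OF J refl])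
      have "(l-a11)*(l-a22) - a12*a21 = l*l + 1" using c by algebra
      moreover have "l*l + 1 > 0" using zero_le_square[of l] by linarith
      ultimately show "(l-a11)*(l-a22) - a12*a21 \<noteq> 0" by simp
    qed (use True in simp_all)
    then show ?thesis using d by blast
  next
    case False
    obtain w1 w2 where w: "w1*w2*a11 + w2*w2*a21 - w1*w1*a12 - w1*w2*a22 \<noteq> 0"
    proof (cases "a21 = 0")
      case False then show ?thesis using that[of 0 1] by simp
    next
      case a21: True
      show ?thesis
      proof (cases "a12 = 0")
        case False then show ?thesis using that[of 1 0] by simp
      next
        case True then show ?thesis using that[of 1 1] a21 \<open>\<not> (a12 = 0 \<and> a21 = 0 \<and> a11 = a22)\<close> by simp
      qed
    qed
    have E: "heis_equiv J (mat3 [0, -(a11*a22 - a12*a21), 0] [1, a11+a22, 0] [0,0,l])"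
      by (rule companion[OF J c w])
    show ?thesis
    proof (cases "a11 + a22 = 0")
      case True
      then have "a11*a22 - a12*a21 = 1" using c by simp
      then have "heis_equiv J (S_end l)" using E True by (simp add: S_end_def)
      then show ?thesis by blast
    next
      case False
      define b where "b = a11 + a22"
      define a where "a = (a11*a22 - a12*a21)/b"
      have ab: "a*b = a11*a22 - a12*a21" using False by (simp add: a_def b_def)
      have lv2: "(a11*a22 - a12*a21 - 1)/(a11+a22) = l" using c False by (simp add: field_simps)
      have lv: "(a*b-1)/b = l" using c False ab by (simp add: b_def field_simps)
      have "T_end a b = mat3 [0, -(a11*a22 - a12*a21), 0] [1, a11+a22, 0] [0,0,l]"
        using lv2 unfolding T_end_def ab by (simp add: b_def)
      then have "heis_equiv J (T_end a b)" using E by simp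
      then show ?thesis using False b_def by blast
    qed
  qed
qed

lemma normal_zt: "zero_torsion (S_end c)" "d \<noteq> 0 \<Longrightarrow> zero_torsion (D_end d)"
  "b \<noteq> 0 \<Longrightarrow> zero_torsion (T_end a b)"
  by (simp_all add: zt_char S_end_def D_end_def T_end_def field_simps power2_eq_square)

lemma backward: assumes "heis_equiv J N" "zero_torsion N" shows "zero_torsion J"
  using assms transfer unfolding heis_equiv_def by blast


lemma invariants:
  assumes "heis_equiv M N" "M$1$3 = 0" "M$2$3 = 0" "N$1$3 = 0" "N$2$3 = 0"
  shows "N$3$3 = M$3$3" "N$1$1 + N$2$2 = M$1$1 + M$2$2"
    "N$1$1*N$2$2 - N$1$2*N$2$1 = M$1$1*M$2$2 - M$1$2*M$2$1"
    "(N$1$2 = 0 \<and> N$2$1 = 0 \<and> N$1$1 = N$2$2) \<longleftrightarrow> (M$1$2 = 0 \<and> M$2$1 = 0 \<and> M$1$1 = M$2$2)"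
proof -
  obtain P where aut: "heis_aut P" and NP0: "N = P ** M ** matrix_inv P"
    using assms(1) heis_equiv_def by blast
  have inv: "invertible P" using aut heis_aut_def by blast
  have "N ** P = P ** M" using minv[OF inv] NP0 by (simp add: matrix_mul_assoc[symmetric])
  then have E: "(N ** P)$i$j = (P ** M)$i$j" for i j by simp
  note f = aut_form[OF aut]
  define d where "d = P$1$1*P$2$2 - P$1$2*P$2$1"
  have d: "d \<noteq> 0" using f d_def by simp
  have e33: "N$3$3 * d = d * M$3$3" using E[of 3 3] f assms(2-5) by (simp add: ent d_def)
  have e11: "N$1$1*P$1$1 + N$1$2*P$2$1 = P$1$1*M$1$1 + P$1$2*M$2$1"
    using E[of 1 1] f assms(2-5) by (simp add: ent)
  have e12: "N$1$1*P$1$2 + N$1$2*P$2$2 = P$1$1*M$1$2 + P$1$2*M$2$2"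
    using E[of 1 2] f assms(2-5) by (simp add: ent)
  have e21: "N$2$1*P$1$1 + N$2$2*P$2$1 = P$2$1*M$1$1 + P$2$2*M$2$1"
    using E[of 2 1] f assms(2-5) by (simp add: ent)
  have e22: "N$2$1*P$1$2 + N$2$2*P$2$2 = P$2$1*M$1$2 + P$2$2*M$2$2"
    using E[of 2 2] f assms(2-5) by (simp add: ent)
  show "N$3$3 = M$3$3" using e33 d by simp
  have "d * (N$1$1 + N$2$2 - (M$1$1 + M$2$2)) = 0" using e11 e12 e21 e22 unfolding d_def by algebra
  then show "N$1$1 + N$2$2 = M$1$1 + M$2$2" using d by simp
  have "d * (N$1$1*N$2$2 - N$1$2*N$2$1 - (M$1$1*M$2$2 - M$1$2*M$2$1)) = 0"
    using e11 e12 e21 e22 unfolding d_def by algebra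
  then show "N$1$1*N$2$2 - N$1$2*N$2$1 = M$1$1*M$2$2 - M$1$2*M$2$1" using d by simp
  show "(N$1$2 = 0 \<and> N$2$1 = 0 \<and> N$1$1 = N$2$2) \<longleftrightarrow> (M$1$2 = 0 \<and> M$2$1 = 0 \<and> M$1$1 = M$2$2)"
  proof
    assume s: "N$1$2 = 0 \<and> N$2$1 = 0 \<and> N$1$1 = N$2$2"
    have "d * M$1$2 = 0" "d * M$2$1 = 0" "d * (M$1$1 - M$2$2) = 0"
      using e11 e12 e21 e22 s unfolding d_def by algebra+
    then show "M$1$2 = 0 \<and> M$2$1 = 0 \<and> M$1$1 = M$2$2" using d by simp
  next
    assume s: "M$1$2 = 0 \<and> M$2$1 = 0 \<and> M$1$1 = M$2$2"
    have "d * N$1$2 = 0" "d * N$2$1 = 0" "d * (N$1$1 - N$2$2) = 0"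
      using e11 e12 e21 e22 s unfolding d_def by algebra+
    then show "N$1$2 = 0 \<and> N$2$1 = 0 \<and> N$1$1 = N$2$2" using d by simp
  qed
qed


lemma TT': assumes b: "b \<noteq> 0" shows "heis_equiv (T_end a b) (T'_end a b)"
  unfolding T_end_def T'_end_def
proof (rule core[where ?b11.0=0 and ?b12.0=1 and ?b21.0="-1/b" and ?b22.0=0, OF refl])
  define l where "l = (a*b - 1)/b"
  have lb: "l * b = a*b - 1" using b by (simp add: l_def field_simps)
  have "(l - 0)*(l - b) - (-(a*b))*1 = l*l + 1" using lb by algebra
  moreover have "l*l + 1 > 0" using zero_le_square[of l] by linarith
  ultimately show "((a*b - 1)/b - 0)*((a*b - 1)/b - b) - (-(a*b))*1 \<noteq> 0" unfolding l_def by simp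
qed (use b in \<open>simp_all add: field_simps\<close>)

lemma nf_cases: "M \<in> normal_forms \<Longrightarrow> (\<exists>c. M = S_end c) \<or> (\<exists>d. d\<noteq>0 \<and> M = D_end d) \<or> (\<exists>a b. b\<noteq>0 \<and> M = T_end a b)"
  unfolding normal_forms_def by blast

lemma nf_zero: "M \<in> normal_forms \<Longrightarrow> M$1$3 = 0 \<and> M$2$3 = 0"
  using nf_cases[of M] by (auto simp: S_end_def D_end_def T_end_def)

lemma noneq: assumes M: "M \<in> normal_forms" and N: "N \<in> normal_forms" and eq: "heis_equiv M N"
  shows "M = N"
proof -
  note I = invariants[OF eq conjunct1[OF nf_zero[OF M]] conjunct2[OF nf_zero[OF M]]
     conjunct1[OF nf_zero[OF N]] conjunct2[OF nf_zero[OF N]]]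
  from nf_cases[OF M] nf_cases[OF N] show ?thesis
  proof (elim disjE exE conjE)
    fix c c' assume "M = S_end c" "N = S_end c'" then show ?thesis using I by (simp add: S_end_def)
  next
    fix c d assume "M = S_end c" "N = D_end d" "d \<noteq> 0" then show ?thesis using I by (simp add: S_end_def D_end_def)
  next
    fix c a b assume "M = S_end c" "N = T_end a b" "b \<noteq> 0" then show ?thesis using I by (simp add: S_end_def T_end_def)
  next
    fix c d assume "N = S_end c" "M = D_end d" "d \<noteq> 0" then show ?thesis using I by (simp add: S_end_def D_end_def)
  next
    fix d d' assume "M = D_end d" "N = D_end d'" then show ?thesis using I by (simp add: D_end_def)
  next
    fix d a b assume "M = D_end d" "N = T_end a b" "b \<noteq> 0" "d \<noteq> 0" then show ?thesis using I by (simp add: D_end_def T_end_def)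
  next
    fix c a b assume "N = S_end c" "M = T_end a b" "b \<noteq> 0" then show ?thesis using I by (simp add: S_end_def T_end_def)
  next
    fix d a b assume "N = D_end d" "M = T_end a b" "b \<noteq> 0" "d \<noteq> 0" then show ?thesis using I by (simp add: D_end_def T_end_def)
  next
    fix a b a' b' assume "M = T_end a b" "N = T_end a' b'" "b \<noteq> 0" "b' \<noteq> 0"
    then show ?thesis using I by (simp add: T_end_def)
  qed
qed

theorem lemma3:
  shows "(\<forall>J. zero_torsion J \<longleftrightarrow>
            (\<exists>c. heis_equiv J (S_end c))
          \<or> (\<exists>d. d \<noteq> 0 \<and> heis_equiv J (D_end d))
          \<or> (\<exists>a b. b \<noteq> 0 \<and> heis_equiv J (T_end a b)))
       \<and> (\<forall>M\<in>normal_forms. \<forall>N\<in>normal_forms. M \<noteq> N \<longrightarrow> \<not> heis_equiv M N)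
       \<and> (\<forall>a b. b \<noteq> 0 \<longrightarrow> heis_equiv (T_end a b) (T'_end a b))"
proof (intro conjI allI ballI impI iffI)
  fix J assume "zero_torsion J" then show "(\<exists>c. heis_equiv J (S_end c))
          \<or> (\<exists>d. d \<noteq> 0 \<and> heis_equiv J (D_end d))
          \<or> (\<exists>a b. b \<noteq> 0 \<and> heis_equiv J (T_end a b))" by (rule forward)
next
  fix J assume "(\<exists>c. heis_equiv J (S_end c))
          \<or> (\<exists>d. d \<noteq> 0 \<and> heis_equiv J (D_end d))
          \<or> (\<exists>a b. b \<noteq> 0 \<and> heis_equiv J (T_end a b))"
  then show "zero_torsion J" using backward normal_zt by blast
next
  fix M N assume "M \<in> normal_forms" "N \<in> normal_forms" "M \<noteq> N"
  then show "\<not> heis_equiv M N" using noneq by blast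
next
  fix a b :: real assume "b \<noteq> 0" then show "heis_equiv (T_end a b) (T'_end a b)" by (rule TT')
qed

end
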